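(* Consider the randomized gossip model described in the context and assume A1, A2 and A3. Assume that either $T_{k+1}\le T_k$ for all $k$, or $T_{k+1}\ge T_k$ for all $k$. Then: (i) if $\sum_{k=0}^\infty T_k(1-T_k)<\infty$, there is $K_0$ such that for all initial times $k_0\ge K_0$ and Lebesgue-almost every initial value $x(k_0)\in\mathbb R^n$, $\mathbf P(\limsup_{k\to\infty}\mathcal H(k)=0)=0$; (ii) if $\sum_{k=0}^\infty T_k(1-T_k)=\infty$, then $\mathbf P(\limsup_{k\to\infty}\mathcal H(k)=0)=1$ for all initial conditions.
   Context: Network with node set $\mathcal V=\{1,\dots,n\}$, $n\ge 3$. Let $A=[a_{ij}]$ be an $n\times n$ stochastic matrix; the underlying digraph $\mathcal G_0$ has an arc $(j,i)$ iff $a_{ij}>0$. At each time $k=0,1,2,\dots$, independently of the past and of node states, a node $i$ is drawn with probability $1/n$ and then the pair $(i,j)$ is selected with probability $a_{ij}$. Given that pair $(i,j)$ is selected at time $k$, independently of time, node states and pair selection, node $i$: with probability $\alpha$ (event $\mathscr A_{ij}(k)$) sets $x_i(k+1)=(1-T_k)x_i(k)+T_kx_j(k)$, $0<T_k\le1$; with probability $\beta$ (event $\mathscr N_{ij}(k)$) keeps $x_i(k+1)=x_i(k)$; with probability $\gamma$ (event $\mathscr R_{ij}(k)$) sets $x_i(k+1)=(1+S_k)x_i(k)-S_kx_j(k)$, $S_k>0$; $\alpha+\beta+\gamma=1$. Node $j$ updates analogously according to events $\mathscr A_{ji}(k),\mathscr N_{ji}(k),\mathscr R_{ji}(k)$;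 other nodes keep their states. Start at time $k_0\ge0$ from $x(k_0)\in\mathbb R^n$. $\mathcal H(k)=\max_i x_i(k)-\min_i x_i(k)$. A1: $\mathcal G_0$ is weakly connected. A2: $\mathscr R_{ij}(k)$ has probability zero for all $(i,j)$, $k$. A3: $\mathscr A_{ij}(k)=\mathscr A_{ji}(k)$ for all $(i,j)$, $k$. *)

theory Defs
  imports "HOL-Probability.Probability"
begin

datatype act = Att | Neu | Rep

text \<open>Weak connectivity of the digraph with arc (j,i) iff a i j > 0: the underlying
  undirected graph (symmetrised arc relation) is connected.\<close>
definition weakly_connected :: "('n::finite \<Rightarrow> 'n \<Rightarrow> real) \<Rightarrow> bool" where
  "weakly_connected A \<longleftrightarrow>
     (\<forall>i j. (i, j) \<in> {(u, v). A u v > 0 \<or> A v u > 0}\<^sup>*)"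

fun node_upd :: "act \<Rightarrow> real \<Rightarrow> real \<Rightarrow> real \<Rightarrow> real \<Rightarrow> real" where
  "node_upd Att t s xs xo = (1 - t) * xs + t * xo"
| "node_upd Neu t s xs xo = xs"
| "node_upd Rep t s xs xo = (1 + s) * xs - s * xo"

definition gossip_step ::
  "real \<Rightarrow> real \<Rightarrow> (('n::finite \<times> 'n) \<times> (act \<times> act)) \<Rightarrow> real^'n \<Rightarrow> real^'n" where
  "gossip_step t s c x = (case c of ((i, j), (ei, ej)) \<Rightarrow>
     (\<chi> l. if l = i then node_upd ei t s (x$i) (x$j)
           else if l = j then node_upd ej t s (x$j) (x$i)
           else x$l))"

fun traj :: "(nat \<Rightarrow> real) \<Rightarrow> (nat \<Rightarrow> real) \<Rightarrow> nat \<Rightarrow> real^'n \<Rightarrow>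
             (('n::finite \<times> 'n) \<times> (act \<times> act)) stream \<Rightarrow> nat \<Rightarrow> real^'n" where
  "traj T S k0 x0 \<omega> 0 = x0"
| "traj T S k0 x0 \<omega> (Suc k) =
     (if k < k0 then x0 else gossip_step (T k) (S k) (\<omega> !! k) (traj T S k0 x0 \<omega> k))"

definition spread :: "real^'n::finite \<Rightarrow> real" where
  "spread x = Max (range (\<lambda>i. x$i)) - Min (range (\<lambda>i. x$i))"

end

theory Submission
  imports Defs
begin


lemma UNIV_act: "(UNIV :: act set) = {Att, Neu, Rep}"
  by (auto intro: act.exhaust)

instance act :: finite
  by standard (simp add: UNIV_act)

definition V :: "real^'n::finite \<Rightarrow> real" where
  "V x = (\<Sum>l\<in>UNIV. (x$l)^2) - (\<Sum>l\<in>UNIV. x$l)^2 / real CARD('n)"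

lemma V_shift:
  fixes x :: "real^'n::finite"
  shows "(\<Sum>l\<in>UNIV. (x$l - c)^2) = V x + real CARD('n) * ((\<Sum>l\<in>UNIV. x$l)/real CARD('n) - c)^2"
proof -
  have n: "real CARD('n) > 0" by simp
  have "(\<Sum>l\<in>UNIV. (x$l - c)^2) = (\<Sum>l\<in>UNIV. (x$l)^2 - 2*c*x$l + c^2)"
    by (rule sum.cong) (simp_all add: power2_diff)
  also have "\<dots> = (\<Sum>l\<in>UNIV. (x$l)^2) - 2*c*(\<Sum>l\<in>UNIV. x$l) + real CARD('n)*c^2"
    by (simp add: sum.distrib sum_subtractf sum_distrib_left)
  finally have e: "(\<Sum>l\<in>UNIV. (x$l - c)^2) = (\<Sum>l\<in>UNIV. (x$l)^2) - 2*c*(\<Sum>l\<in>UNIV. x$l) + real CARD('n)*c^2" .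
  have alg: "\<And>Q S N. N > 0 \<Longrightarrow> Q - 2*c*S + N*c^2 = (Q - S^2/N) + N*(S/N - c)^2"
    by (simp add: power2_diff power_divide field_simps power2_eq_square)
  show ?thesis unfolding V_def e by (rule alg[OF n])
qed

lemma V_le: "V (x::real^'n::finite) \<le> (\<Sum>l\<in>UNIV. (x$l - c)^2)"
  using V_shift[of x c] by simp

lemma V_eq_mean: "V (x::real^'n::finite) = (\<Sum>l\<in>UNIV. (x$l - (\<Sum>l\<in>UNIV. x$l)/real CARD('n))^2)"
  using V_shift[of x "(\<Sum>l\<in>UNIV. x$l)/real CARD('n)"] by simp

lemma V_nonneg: "0 \<le> V (x::real^'n::finite)"
  by (subst V_eq_mean) (simp add: sum_nonneg)

lemma sq2: "((u::real) - v)^2 \<le> 2*((u-m)^2+(v-m)^2)"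
proof -
  have "2*((u-m)^2+(v-m)^2) - (u-v)^2 = (u+v-2*m)^2" by (simp add: power2_eq_square algebra_simps)
  then show ?thesis by (metis diff_ge_0_iff_ge zero_le_power2)
qed

lemma V_pair: "(x$a - x$b)^2 \<le> 2 * V (x::real^'n::finite)"
proof (cases "a = b")
  case True then show ?thesis using V_nonneg[of x] by simp
next
  case False
  define m where "m = (\<Sum>l\<in>UNIV. x$l)/real CARD('n)"
  have "(x$a - m)^2 + (x$b - m)^2 = (\<Sum>l\<in>{a,b}. (x$l - m)^2)" using False by simp
  also have "\<dots> \<le> (\<Sum>l\<in>UNIV. (x$l - m)^2)" by (rule sum_mono2) auto
  also have "\<dots> = V x" by (simp add: V_eq_mean m_def)
  finally have h: "(x$a - m)^2 + (x$b - m)^2 \<le> V x" .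
  have h1: "(x$a - x$b)^2 \<le> 2*((x$a - m)^2 + (x$b - m)^2)"
    by (rule sq2)
  have h2: "2*((x$a - m)^2 + (x$b - m)^2) \<le> 2 * V x" using h by simp
  show ?thesis using order_trans[OF h1 h2] .
qed

lemma spread_facts:
  fixes x :: "real^'n::finite"
  shows "\<exists>a. Max (range (\<lambda>i. x$i)) = x$a" "\<exists>b. Min (range (\<lambda>i. x$i)) = x$b"
    "x$i \<le> Max (range (\<lambda>i. x$i))" "Min (range (\<lambda>i. x$i)) \<le> x$i"
proof -
  have f: "finite (range (\<lambda>i. x$i))" "range (\<lambda>i. x$i) \<noteq> {}" by auto
  have "Max (range (\<lambda>i. x$i)) \<in> range (\<lambda>i. x$i)" by (rule Max_in[OF f])
  then show "\<exists>a. Max (range (\<lambda>i. x$i)) = x$a" by blast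
  have "Min (range (\<lambda>i. x$i)) \<in> range (\<lambda>i. x$i)" by (rule Min_in[OF f])
  then show "\<exists>b. Min (range (\<lambda>i. x$i)) = x$b" by blast
  show "x$i \<le> Max (range (\<lambda>i. x$i))" using f by simp
  show "Min (range (\<lambda>i. x$i)) \<le> x$i" using f by simp
qed

lemma spread_nonneg: "0 \<le> spread (x::real^'n::finite)"
  unfolding spread_def using spread_facts(3,4)[of x undefined] by linarith

lemma spread_sq_le: "(spread x)^2 \<le> 2 * V (x::real^'n::finite)"
proof -
  obtain a b where "Max (range (\<lambda>i. x$i)) = x$a" "Min (range (\<lambda>i. x$i)) = x$b"
    using spread_facts(1,2)[of x] by blast
  then have "spread x = x$a - x$b" by (simp add: spread_def)
  then show ?thesis using V_pair[of x a b] by simp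
qed

lemma V_le_spread: "V (x::real^'n::finite) \<le> real CARD('n) * (spread x)^2"
proof -
  let ?m = "Min (range (\<lambda>i. x$i))"
  have "V x \<le> (\<Sum>l\<in>UNIV. (x$l - ?m)^2)" by (rule V_le)
  also have "\<dots> \<le> (\<Sum>l\<in>(UNIV::'n set). (spread x)^2)"
  proof (rule sum_mono)
    fix l :: 'n
    have "0 \<le> x$l - ?m" "x$l - ?m \<le> spread x"
      using spread_facts(3,4)[of x l] by (auto simp: spread_def)
    then show "(x$l - ?m)^2 \<le> (spread x)^2" by (simp add: power_mono)
  qed
  also have "\<dots> = real CARD('n) * (spread x)^2" by simp
  finally show ?thesis .
qed

lemma sum_two:
  fixes x y :: "real^'n::finite" and f :: "real \<Rightarrow> real"
  assumes ij: "i \<noteq> j" and oth: "\<forall>l. l \<noteq> i \<longrightarrow> l \<noteq> j \<longrightarrow> y$l = x$l"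
  shows "(\<Sum>l\<in>UNIV. f (y$l)) = (\<Sum>l\<in>UNIV. f (x$l)) - f (x$i) - f (x$j) + f (y$i) + f (y$j)"
proof -
  have split: "(\<Sum>l\<in>UNIV. f (z$l)) = f (z$i) + f (z$j) + (\<Sum>l\<in>UNIV-{i}-{j}. f (z$l))" for z :: "real^'n"
  proof -
    have "(\<Sum>l\<in>UNIV. f (z$l)) = f (z$i) + (\<Sum>l\<in>UNIV-{i}. f (z$l))"
      by (rule sum.remove) auto
    also have "(\<Sum>l\<in>UNIV-{i}. f (z$l)) = f (z$j) + (\<Sum>l\<in>UNIV-{i}-{j}. f (z$l))"
      by (rule sum.remove) (use ij in auto)
    finally show ?thesis by simp
  qed
  have "(\<Sum>l\<in>UNIV-{i}-{j}. f (y$l)) = (\<Sum>l\<in>UNIV-{i}-{j}. f (x$l))"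
    by (rule sum.cong) (use oth in auto)
  then show ?thesis using split[of y] split[of x] by simp
qed

lemma step_same: "gossip_step t s ((i,i),(e1,e2)) x = x"
  by (cases e1) (auto simp: gossip_step_def vec_eq_iff algebra_simps)

lemma step_neu: "gossip_step t s ((i,j),(Neu,Neu)) x = x"
  by (auto simp: gossip_step_def vec_eq_iff)

lemma V_step_att:
  fixes x :: "real^'n::finite"
  shows "V (gossip_step t s ((i,j),(Att,Att)) x) = V x - 2*t*(1-t)*(x$i - x$j)^2"
proof (cases "i = j")
  case True then show ?thesis by (simp add: step_same)
next
  case False
  define y where "y = gossip_step t s ((i,j),(Att,Att)) x"
  have yi: "y$i = (1-t)*x$i + t*x$j" and yj: "y$j = (1-t)*x$j + t*x$i"
    using False by (auto simp: y_def gossip_step_def)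
  have oth: "\<forall>l. l \<noteq> i \<longrightarrow> l \<noteq> j \<longrightarrow> y$l = x$l" by (auto simp: y_def gossip_step_def)
  have s1: "(\<Sum>l\<in>UNIV. y$l) = (\<Sum>l\<in>UNIV. x$l)"
    using sum_two[OF False oth, of "\<lambda>u. u"] yi yj by (simp add: algebra_simps)
  have s2: "(\<Sum>l\<in>UNIV. (y$l)^2) = (\<Sum>l\<in>UNIV. (x$l)^2) - 2*t*(1-t)*(x$i - x$j)^2"
    using sum_two[OF False oth, of "\<lambda>u. u^2"] yi yj by (simp add: power2_eq_square algebra_simps)
  show ?thesis unfolding y_def[symmetric] V_def s1 s2 by simp
qed

definition Sup2 :: "(act \<times> act) set" where "Sup2 = {(Att,Att),(Neu,Neu)}"

lemma supp_q:
  assumes r1: "pmf (map_pmf fst q) Rep = 0" and r2: "pmf (map_pmf snd q) Rep = 0"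
    and A3: "\<forall>e\<in>set_pmf q. fst e = Att \<longleftrightarrow> snd e = Att" and e: "e \<in> set_pmf q"
  shows "e \<in> Sup2"
proof -
  have "fst e \<noteq> Rep"
  proof
    assume "fst e = Rep"
    then have "Rep \<in> set_pmf (map_pmf fst q)" using e image_eqI[of Rep fst e "set_pmf q"] by (simp add: set_map_pmf)
    then show False using r1 by (simp add: set_pmf_eq)
  qed
  moreover have "snd e \<noteq> Rep"
  proof
    assume "snd e = Rep"
    then have "Rep \<in> set_pmf (map_pmf snd q)" using e image_eqI[of Rep snd e "set_pmf q"] by (simp add: set_map_pmf)
    then show False using r2 by (simp add: set_pmf_eq)
  qed
  moreover have "fst e = Att \<longleftrightarrow> snd e = Att" using A3 e by blast
  ultimately show ?thesis unfolding Sup2_def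
    by (cases "fst e"; cases "snd e") (auto simp: prod_eq_iff)
qed

lemma V_step:
  fixes x :: "real^'n::finite"
  assumes "snd c \<in> Sup2"
  shows "V (gossip_step t s c x) = V x - (if fst (snd c) = Att then 2*t*(1-t)*(x$(fst (fst c)) - x$(snd (fst c)))^2 else 0)"
  using assms by (cases c) (auto simp: Sup2_def V_step_att step_neu)

lemma V_step_le:
  fixes x :: "real^'n::finite"
  assumes "snd c \<in> Sup2" "0 \<le> t" "t \<le> 1"
  shows "V (gossip_step t s c x) \<le> V x"
proof -
  have "0 \<le> 2*t*(1-t)*(x$(fst (fst c)) - x$(snd (fst c)))^2" using assms by simp
  then show ?thesis using V_step[OF assms(1), of t s x] by auto
qed

lemma V_step_ge:
  fixes x :: "real^'n::finite"
  assumes "snd c \<in> Sup2" "0 \<le> t" "t \<le> 1"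
  shows "(1 - 4*(t*(1-t))) * V x \<le> V (gossip_step t s c x)"
proof -
  define D where "D = (x$(fst (fst c)) - x$(snd (fst c)))^2"
  define K where "K = t*(1-t)"
  have tt: "0 \<le> K" using assms by (simp add: K_def)
  have d: "D \<le> 2 * V x" unfolding D_def by (rule V_pair)
  have D0: "0 \<le> D" by (simp add: D_def)
  have KD: "0 \<le> K*D" using tt D0 by simp
  have e1: "V x - 2*K*D \<le> V (gossip_step t s c x)"
    using V_step[OF assms(1), of t s x] KD unfolding D_def[symmetric]
    by (cases "fst (snd c) = Att") (auto simp: K_def mult.assoc)
  have e2: "2*K*D \<le> 2*K*(2*V x)" using mult_left_mono[OF d, of "2*K"] tt by simp
  have e3: "(1 - 4*K) * V x = V x - 2*K*(2*V x)" by (simp add: algebra_simps)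
  show ?thesis unfolding K_def[symmetric] e3 using e1 e2 by linarith
qed

lemma traj_le: "k \<le> k0 \<Longrightarrow> traj T S k0 x0 \<omega> k = x0"
  by (induction k) auto

lemma traj_mono:
  assumes supp: "\<forall>k. snd (\<omega> !! k) \<in> Sup2" and Tr: "\<forall>k. 0 < T k \<and> T k \<le> 1"
  shows "V (traj T S k0 x0 \<omega> (Suc k)) \<le> V (traj T S k0 x0 \<omega> k)"
  using V_step_le[OF supp[rule_format, of k]] Tr by (cases "k < k0") (auto simp: traj_le less_imp_le)

lemma traj_lower:
  assumes supp: "\<forall>k. snd (\<omega> !! k) \<in> Sup2" and Tr: "\<forall>k. 0 < T k \<and> T k \<le> 1"
  shows "(\<Prod>j\<in>{k0..<k}. (1 - 4*(T j*(1-T j)))) * V x0 \<le> V (traj T S k0 x0 \<omega> k)"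
proof (induction k)
  case 0 then show ?case by simp
next
  case (Suc k)
  show ?case
  proof (cases "k < k0")
    case True
    then show ?thesis by (simp add: traj_le)
  next
    case False
    have f: "0 \<le> 1 - 4*(T k*(1-T k))"
    proof -
      have "4*(T k*(1-T k)) = 1 - (1 - 2*T k)^2" by (simp add: power2_eq_square algebra_simps)
      then show ?thesis by simp
    qed
    have "(\<Prod>j\<in>{k0..<Suc k}. (1 - 4*(T j*(1-T j)))) * V x0
        = (1 - 4*(T k*(1-T k))) * ((\<Prod>j\<in>{k0..<k}. (1 - 4*(T j*(1-T j)))) * V x0)"
      using False by (simp add: prod.atLeastLessThan_Suc)
    also have "\<dots> \<le> (1 - 4*(T k*(1-T k))) * V (traj T S k0 x0 \<omega> k)"
      by (rule mult_left_mono[OF Suc f])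
    also have "\<dots> \<le> V (traj T S k0 x0 \<omega> (Suc k))"
      using False V_step_ge[OF supp[rule_format, of k]] Tr by (auto simp: less_imp_le)
    finally show ?thesis .
  qed
qed

lemma exp_le_one_minus:
  fixes y :: real assumes "0 \<le> y" "y \<le> 1/2"
  shows "exp (-2*y) \<le> 1 - y"
proof -
  have "y*(2*y) \<le> y*1" by (rule mult_left_mono) (use assms in auto)
  then have "-2*y \<le> - y - 2*y^2" by (simp add: power2_eq_square algebra_simps)
  also have "\<dots> \<le> ln (1 - y)" by (rule ln_one_minus_pos_lower_bound[OF assms])
  finally have "exp (-2*y) \<le> exp (ln (1-y))" by simp
  then show ?thesis using assms by simp
qed

lemma prod_lower:
  fixes y :: "nat \<Rightarrow> real"
  assumes "\<forall>j\<in>I. 0 \<le> y j \<and> y j \<le> 1/2" "finite I"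
  shows "exp (-2 * (\<Sum>j\<in>I. y j)) \<le> (\<Prod>j\<in>I. (1 - y j))"
proof -
  have "exp (-2 * (\<Sum>j\<in>I. y j)) = (\<Prod>j\<in>I. exp (-2 * y j))"
    using assms(2) by (simp add: sum_distrib_left exp_sum sum_negf[symmetric])
  also have "\<dots> \<le> (\<Prod>j\<in>I. (1 - y j))"
    by (rule prod_mono) (use assms exp_le_one_minus in auto)
  finally show ?thesis .
qed

lemma prod_upper:
  fixes y :: "nat \<Rightarrow> real"
  assumes "\<forall>j\<in>I. 0 \<le> y j \<and> y j \<le> 1" "finite I"
  shows "(\<Prod>j\<in>I. (1 - y j)) \<le> exp (- (\<Sum>j\<in>I. y j))"
proof -
  have "(\<Prod>j\<in>I. (1 - y j)) \<le> (\<Prod>j\<in>I. exp (- y j))"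
    by (rule prod_mono) (use assms in \<open>auto intro: order_trans[OF _ exp_ge_add_one_self]\<close>)
  also have "\<dots> = exp (- (\<Sum>j\<in>I. y j))"
    using assms(2) by (simp add: exp_sum sum_negf[symmetric])
  finally show ?thesis .
qed

lemma part1_det:
  fixes x0 :: "real^'n::finite"
  assumes supp: "\<forall>k. snd (\<omega> !! k) \<in> Sup2" and Tr: "\<forall>k. 0 < T k \<and> T k \<le> 1"
    and sa: "summable (\<lambda>k. T k * (1 - T k))" and small: "\<forall>j\<ge>k0. T j * (1 - T j) \<le> 1/8"
    and V0: "0 < V x0"
  shows "limsup (\<lambda>k. ereal (spread (traj T S k0 x0 \<omega> k))) \<noteq> 0"
proof -
  let ?a = "\<lambda>k. T k * (1 - T k)"
  have a0: "\<And>k. 0 \<le> ?a k" using Tr by (metis diff_ge_0_iff_ge less_imp_le mult_nonneg_nonneg)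
  define c where "c = exp (-8 * suminf ?a) * V x0"
  have c0: "0 < c" using V0 by (simp add: c_def)
  have lowk: "c \<le> V (traj T S k0 x0 \<omega> k)" for k
  proof -
    have "(\<Sum>j\<in>{k0..<k}. ?a j) \<le> suminf ?a" by (rule sum_le_suminf[OF sa]) (auto simp: a0)
    then have "exp (-8 * suminf ?a) \<le> exp (-2 * (\<Sum>j\<in>{k0..<k}. 4 * ?a j))"
      by (simp add: sum_distrib_left[symmetric])
    also have "\<dots> \<le> (\<Prod>j\<in>{k0..<k}. (1 - 4 * ?a j))"
      by (rule prod_lower) (use small a0 in auto)
    finally have "c \<le> (\<Prod>j\<in>{k0..<k}. (1 - 4 * ?a j)) * V x0"
      unfolding c_def using V0 by (simp add: mult_right_mono)
    also have "\<dots> \<le> V (traj T S k0 x0 \<omega> k)" by (rule traj_lower[OF supp Tr])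
    finally show ?thesis .
  qed
  define \<delta> where "\<delta> = sqrt (c / real CARD('n))"
  have d0: "0 < \<delta>" using c0 by (simp add: \<delta>_def)
  have dle: "\<delta> \<le> spread (traj T S k0 x0 \<omega> k)" for k
  proof -
    have "c \<le> real CARD('n) * (spread (traj T S k0 x0 \<omega> k))^2"
      using lowk[of k] V_le_spread[of "traj T S k0 x0 \<omega> k"] by linarith
    then have "c / real CARD('n) \<le> (spread (traj T S k0 x0 \<omega> k))^2"
      by (simp add: field_simps)
    then have "\<delta> \<le> sqrt ((spread (traj T S k0 x0 \<omega> k))^2)"
      unfolding \<delta>_def by (rule real_sqrt_le_mono)
    then show ?thesis using spread_nonneg[of "traj T S k0 x0 \<omega> k"] by simp
  qed
  have "ereal \<delta> \<le> limsup (\<lambda>k. ereal (spread (traj T S k0 x0 \<omega> k)))"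
    by (rule le_Limsup) (use dle in auto)
  then show ?thesis using d0 by auto
qed

lemma AE_noncons:
  assumes "CARD('n::finite) \<ge> 2"
  shows "AE x in (lborel :: (real^'n) measure). 0 < V x"
proof -
  obtain a b :: 'n where ab: "a \<noteq> b"
  proof -
    have "\<not> card (UNIV :: 'n set) \<le> Suc 0" using assms by simp
    then have "\<not> (\<forall>a1\<in>(UNIV::'n set). \<forall>a2\<in>UNIV. a1 = a2)"
      using card_le_Suc0_iff_eq[of "UNIV :: 'n set"] by simp
    then show ?thesis using that by blast
  qed
  define w :: "real^'n" where "w = axis a 1 - axis b 1"
  define N where "N = {x :: real^'n. w \<bullet> x = 0}"
  have w0: "w \<noteq> 0"
  proof
    assume "w = 0"
    then have "w $ a = 0" by simp
    then show False using ab by (simp add: w_def axis_def)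
  qed
  have "negligible N" unfolding N_def by (rule negligible_hyperplane) (use w0 in simp)
  then have "N \<in> null_sets lebesgue" by (simp add: negligible_iff_null_sets)
  moreover have "N \<in> sets lborel" unfolding N_def by (simp add: closed_hyperplane)
  ultimately have N: "N \<in> null_sets lborel" by (simp add: null_sets_completion_iff)
  show ?thesis
  proof (rule AE_I'[OF N], safe)
    fix x :: "real^'n" assume "\<not> 0 < V x"
    have "w \<bullet> x = x$a - x$b" by (simp add: w_def inner_diff_left inner_axis')
    moreover have "(x$a - x$b)^2 \<le> 2 * V x" by (rule V_pair)
    moreover have "0 \<le> V x" by (rule V_nonneg)
    ultimately have "(x$a - x$b)^2 \<le> 0" "w \<bullet> x = x$a - x$b" using \<open>\<not> 0 < V x\<close> by auto
    then have "(x$a - x$b)^2 = 0" "w \<bullet> x = x$a - x$b" by (auto intro: antisym)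
    then show "x \<in> N" unfolding N_def by simp
  qed
qed

lemma conn_const:
  fixes A :: "'n::finite \<Rightarrow> 'n \<Rightarrow> real"
  assumes nonneg: "\<forall>i j. A i j \<ge> 0" and wc: "weakly_connected A"
  shows "\<exists>c>0. \<forall>x::real^'n. c * V x \<le> (\<Sum>i\<in>UNIV. \<Sum>j\<in>UNIV. A i j * (x$i - x$j)^2)"
proof -
  define Q where "Q x = (\<Sum>i\<in>UNIV. \<Sum>j\<in>UNIV. A i j * (x$i - x$j)^2)" for x :: "real^'n"
  have Q0: "0 \<le> Q x" for x unfolding Q_def using nonneg by (intro sum_nonneg) auto
  have trm: "A u v * (x$u - x$v)^2 \<le> Q x" for u v x
  proof -
    have "A u v * (x$u - x$v)^2 \<le> (\<Sum>j\<in>UNIV. A u j * (x$u - x$j)^2)"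
      by (rule member_le_sum) (use nonneg in auto)
    also have "\<dots> \<le> Q x" unfolding Q_def
      by (rule member_le_sum) (use nonneg in \<open>auto intro!: sum_nonneg\<close>)
    finally show ?thesis .
  qed
  have edge1: "\<bar>x$u - x$v\<bar> \<le> sqrt (1 / A u v) * sqrt (Q x)" if "A u v > 0" for u v x
  proof -
    have "(x$u - x$v)^2 \<le> Q x / A u v" using trm[of u v x] that by (simp add: pos_le_divide_eq mult.commute)
    then have "(x$u - x$v)^2 \<le> (1 / A u v) * Q x" by simp
    then have "sqrt ((x$u - x$v)^2) \<le> sqrt ((1 / A u v) * Q x)" by (rule real_sqrt_le_mono)
    then show ?thesis by (simp only: real_sqrt_mult real_sqrt_abs)
  qed
  let ?E = "{(u, v). A u v > 0 \<or> A v u > 0}"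
  have edge: "\<exists>C\<ge>0. \<forall>x. \<bar>x$u - x$v\<bar> \<le> C * sqrt (Q x)" if "(u, v) \<in> ?E" for u v
  proof (cases "A u v > 0")
    case True then show ?thesis using edge1[OF True] by (intro exI[of _ "sqrt (1 / A u v)"]) auto
  next
    case False
    then have "A v u > 0" using that by auto
    then show ?thesis using edge1[OF \<open>A v u > 0\<close>] by (intro exI[of _ "sqrt (1 / A v u)"]) (auto simp: abs_minus_commute)
  qed
  have path: "\<exists>C\<ge>0. \<forall>x. \<bar>x$i - x$j\<bar> \<le> C * sqrt (Q x)" if "(i, j) \<in> ?E\<^sup>*" for i j
    using that
  proof (induction rule: rtrancl_induct)
    case base then show ?case by (intro exI[of _ 0]) auto
  next
    case (step y z)
    obtain C1 where C1: "C1 \<ge> 0" "\<forall>x. \<bar>x$i - x$y\<bar> \<le> C1 * sqrt (Q x)" using step.IH by blast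
    obtain C2 where C2: "C2 \<ge> 0" "\<forall>x. \<bar>x$y - x$z\<bar> \<le> C2 * sqrt (Q x)" using edge[OF step.hyps(2)] by blast
    show ?case
    proof (intro exI[of _ "C1 + C2"] conjI allI)
      fix x :: "real^'n"
      have "\<bar>x$i - x$z\<bar> \<le> \<bar>x$i - x$y\<bar> + \<bar>x$y - x$z\<bar>" by simp
      also have "\<dots> \<le> C1 * sqrt (Q x) + C2 * sqrt (Q x)" using C1(2) C2(2) by (meson add_mono)
      finally show "\<bar>x$i - x$z\<bar> \<le> (C1 + C2) * sqrt (Q x)" by (simp add: algebra_simps)
    qed (use C1 C2 in simp)
  qed
  define Cf where "Cf i j = (SOME C. C \<ge> 0 \<and> (\<forall>x. \<bar>x$i - x$j\<bar> \<le> C * sqrt (Q x)))" for i j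
  have Cf: "Cf i j \<ge> 0 \<and> (\<forall>x. \<bar>x$i - x$j\<bar> \<le> Cf i j * sqrt (Q x))" for i j
  proof -
    have "(i, j) \<in> ?E\<^sup>*" using wc unfolding weakly_connected_def by blast
    then have "\<exists>C. C \<ge> 0 \<and> (\<forall>x. \<bar>x$i - x$j\<bar> \<le> C * sqrt (Q x))" using path by blast
    then show ?thesis unfolding Cf_def by (rule someI_ex)
  qed
  define Cm where "Cm = (\<Sum>i\<in>UNIV. \<Sum>j\<in>UNIV. Cf i j)"
  have Cm: "Cf i j \<le> Cm" for i j
  proof -
    have "Cf i j \<le> (\<Sum>j\<in>UNIV. Cf i j)" by (rule member_le_sum) (use Cf in auto)
    also have "\<dots> \<le> Cm" unfolding Cm_def by (rule member_le_sum) (use Cf in \<open>auto intro!: sum_nonneg\<close>)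
    finally show ?thesis .
  qed
  have Cm0: "0 \<le> Cm" using Cm[of undefined undefined] Cf[of undefined undefined] by linarith
  define c where "c = 1 / (real CARD('n) * Cm^2 + 1)"
  have "0 \<le> real CARD('n) * Cm^2" by simp
  then have npos: "0 < real CARD('n) * Cm^2 + 1" by linarith
  have cpos: "c > 0" unfolding c_def using npos by simp
  have "c * V x \<le> Q x" for x
  proof -
    have pt: "(x$l - x$undefined)^2 \<le> Cm^2 * Q x" for l
    proof -
      have sq0: "0 \<le> sqrt (Q x)" using Q0[of x] by simp
      have "Cf l undefined * sqrt (Q x) \<le> Cm * sqrt (Q x)" by (rule mult_right_mono[OF Cm sq0])
      then have "\<bar>x$l - x$undefined\<bar> \<le> Cm * sqrt (Q x)"
        using Cf[of l undefined] by (meson order_trans)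
      then have "\<bar>x$l - x$undefined\<bar>^2 \<le> (Cm * sqrt (Q x))^2" by (rule power_mono) simp
      then show ?thesis using Q0[of x] by (simp add: power_mult_distrib)
    qed
    have "V x \<le> (\<Sum>l\<in>UNIV. (x$l - x$undefined)^2)" by (rule V_le)
    also have "\<dots> \<le> (\<Sum>l\<in>(UNIV::'n set). Cm^2 * Q x)" by (rule sum_mono) (rule pt)
    also have "\<dots> = real CARD('n) * Cm^2 * Q x" by simp
    also have "\<dots> \<le> (real CARD('n) * Cm^2 + 1) * Q x" using Q0[of x] by (simp add: algebra_simps)
    finally have "V x \<le> (real CARD('n) * Cm^2 + 1) * Q x" .
    then show ?thesis unfolding c_def using npos by (simp add: field_simps)
  qed
  then show ?thesis using cpos unfolding Q_def by blast
qed

lemma sum_prod_UNIV: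
  "(\<Sum>c\<in>(UNIV::('a::finite \<times> 'b::finite) set). f c) = (\<Sum>a\<in>UNIV. \<Sum>b\<in>UNIV. f (a,b))"
  unfolding UNIV_Times_UNIV[symmetric] sum.cartesian_product by (simp add: case_prod_unfold)

lemma nn_pmf_fin:
  fixes M :: "('a::finite) pmf"
  assumes "\<And>c. 0 \<le> f c"
  shows "(\<integral>\<^sup>+c. ennreal (f c) \<partial>measure_pmf M) = ennreal (\<Sum>c\<in>UNIV. pmf M c * f c)"
  using assms
  by (subst nn_integral_measure_pmf_support[of UNIV])
     (auto simp: sum_ennreal[symmetric] ennreal_mult'' mult.commute intro: sum.cong)

lemma AE_supp:
  "AE \<omega> in stream_space (measure_pmf M). \<forall>k. \<omega> !! k \<in> set_pmf M"
proof -
  have "AE \<omega> in stream_space (measure_pmf M). stream_all (\<lambda>c. c \<in> set_pmf M) \<omega>"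
    by (rule prob_space.AE_stream_all[OF prob_space_measure_pmf]) (auto simp: AE_measure_pmf)
  then show ?thesis by (simp only: stream_all_def)
qed

fun G :: "(nat \<Rightarrow> real) \<Rightarrow> (nat \<Rightarrow> real) \<Rightarrow> nat \<Rightarrow> real^'n \<Rightarrow> nat \<Rightarrow>
             (('n::finite \<times> 'n) \<times> (act \<times> act)) stream \<Rightarrow> real^'n" where
  "G T S t x 0 \<omega> = x"
| "G T S t x (Suc n) \<omega> = G T S (Suc t) (gossip_step (T t) (S t) (shd \<omega>) x) n (stl \<omega>)"

lemma G_snoc: "G T S t x (Suc n) \<omega> = gossip_step (T (t+n)) (S (t+n)) (\<omega> !! n) (G T S t x n \<omega>)"
proof (induction n arbitrary: t x \<omega>)
  case 0 then show ?case by simp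
next
  case (Suc n)
  have "G T S t x (Suc (Suc n)) \<omega> = G T S (Suc t) (gossip_step (T t) (S t) (shd \<omega>) x) (Suc n) (stl \<omega>)"
    by simp
  also have "\<dots> = gossip_step (T (t + Suc n)) (S (t + Suc n)) (\<omega> !! Suc n) (G T S t x (Suc n) \<omega>)"
    by (subst Suc.IH) simp
  finally show ?case .
qed

lemma traj_G: "traj T S k0 x0 \<omega> (k0 + n) = G T S k0 x0 n (sdrop k0 \<omega>)"
proof (induction n)
  case 0 then show ?case by (simp add: traj_le)
next
  case (Suc n)
  have "traj T S k0 x0 \<omega> (k0 + Suc n) = gossip_step (T (k0+n)) (S (k0+n)) (\<omega> !! (k0+n)) (traj T S k0 x0 \<omega> (k0 + n))"
    by simp
  also have "\<dots> = gossip_step (T (k0+n)) (S (k0+n)) ((sdrop k0 \<omega>) !! n) (G T S k0 x0 n (sdrop k0 \<omega>))"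
    using Suc by (simp add: sdrop_snth)
  also have "\<dots> = G T S k0 x0 (Suc n) (sdrop k0 \<omega>)" by (rule G_snoc[symmetric])
  finally show ?case .
qed

lemma G_meas:
  fixes f :: "real^'n::finite \<Rightarrow> 'b::topological_space"
  shows "(\<lambda>\<omega>. f (G T S t x n \<omega>)) \<in> borel_measurable (stream_space (measure_pmf M))"
proof (induction n arbitrary: t x)
  case 0 then show ?case by simp
next
  case (Suc n)
  have sh: "shd \<in> measurable (stream_space (measure_pmf M)) (count_space UNIV)"
    using measurable_shd[of "measure_pmf M"] by simp
  have "(\<lambda>\<omega>. (\<lambda>c \<omega>. f (G T S (Suc t) (gossip_step (T t) (S t) c x) n (stl \<omega>))) (shd \<omega>) \<omega>)
        \<in> borel_measurable (stream_space (measure_pmf M))"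
    by (rule measurable_compose_countable'[OF _ sh])
       (auto intro: measurable_compose[OF measurable_stl Suc.IH])
  then show ?case by simp
qed

lemma sdrop_nn:
  fixes f :: "_ \<Rightarrow> ennreal"
  assumes fm: "f \<in> borel_measurable (stream_space (measure_pmf M))"
  shows "(\<integral>\<^sup>+\<omega>. f (sdrop k \<omega>) \<partial>stream_space (measure_pmf M)) = (\<integral>\<^sup>+\<omega>. f \<omega> \<partial>stream_space (measure_pmf M))"
proof (induction k)
  case 0 then show ?case by simp
next
  case (Suc k)
  interpret SP: prob_space "stream_space (measure_pmf M)" by (rule prob_space.prob_space_stream_space[OF prob_space_measure_pmf])
  have gm: "(\<lambda>\<omega>. f (sdrop k \<omega>)) \<in> borel_measurable (stream_space (measure_pmf M))"
    using fm by measurable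
  have "(\<integral>\<^sup>+\<omega>. f (sdrop (Suc k) \<omega>) \<partial>stream_space (measure_pmf M))
      = (\<integral>\<^sup>+\<omega>. f (sdrop k (stl \<omega>)) \<partial>stream_space (measure_pmf M))" by simp
  also have "\<dots> = (\<integral>\<^sup>+c. (\<integral>\<^sup>+\<omega>. f (sdrop k (stl (c ## \<omega>))) \<partial>stream_space (measure_pmf M)) \<partial>measure_pmf M)"
    by (rule prob_space.nn_integral_stream_space[OF prob_space_measure_pmf]) (use gm in measurable)
  also have "\<dots> = (\<integral>\<^sup>+c. (\<integral>\<^sup>+\<omega>. f \<omega> \<partial>stream_space (measure_pmf M)) \<partial>measure_pmf M)"
    using Suc by simp
  also have "\<dots> = (\<integral>\<^sup>+\<omega>. f \<omega> \<partial>stream_space (measure_pmf M))"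
    by (simp add: measure_pmf.emeasure_space_1)
  finally show ?case .
qed

lemma G_expect:
  fixes M :: "(('n::finite \<times> 'n) \<times> (act \<times> act)) pmf" and y :: "nat \<Rightarrow> real"
  assumes step: "\<forall>t (x::real^'n). (\<integral>\<^sup>+c. ennreal (V (gossip_step (T t) (S t) c x)) \<partial>measure_pmf M) \<le> ennreal ((1 - y t) * V x)"
    and y1: "\<forall>t. 0 \<le> 1 - y t"
  shows "(\<integral>\<^sup>+\<omega>. ennreal (V (G T S t x n \<omega>)) \<partial>stream_space (measure_pmf M)) \<le> ennreal ((\<Prod>j<n. (1 - y (t+j))) * V x)"
proof (induction n arbitrary: t x)
  case 0
  interpret SP: prob_space "stream_space (measure_pmf M)" by (rule prob_space.prob_space_stream_space[OF prob_space_measure_pmf])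
  show ?case by (simp add: SP.emeasure_space_1)
next
  case (Suc n)
  define P where "P = (\<Prod>j<n. (1 - y (Suc t + j)))"
  have P0: "0 \<le> P" unfolding P_def using y1 by (simp add: prod_nonneg)
  have "(\<integral>\<^sup>+\<omega>. ennreal (V (G T S t x (Suc n) \<omega>)) \<partial>stream_space (measure_pmf M))
     = (\<integral>\<^sup>+c. (\<integral>\<^sup>+\<omega>. ennreal (V (G T S t x (Suc n) (c ## \<omega>))) \<partial>stream_space (measure_pmf M)) \<partial>measure_pmf M)"
    by (rule prob_space.nn_integral_stream_space[OF prob_space_measure_pmf]) (rule G_meas)
  also have "\<dots> = (\<integral>\<^sup>+c. (\<integral>\<^sup>+\<omega>. ennreal (V (G T S (Suc t) (gossip_step (T t) (S t) c x) n \<omega>)) \<partial>stream_space (measure_pmf M)) \<partial>measure_pmf M)"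
    by simp
  also have "\<dots> \<le> (\<integral>\<^sup>+c. ennreal (P * V (gossip_step (T t) (S t) c x)) \<partial>measure_pmf M)"
    by (rule nn_integral_mono) (unfold P_def, rule Suc.IH)
  also have "\<dots> = ennreal P * (\<integral>\<^sup>+c. ennreal (V (gossip_step (T t) (S t) c x)) \<partial>measure_pmf M)"
    using P0 by (simp add: ennreal_mult nn_integral_cmult V_nonneg)
  also have "\<dots> \<le> ennreal P * ennreal ((1 - y t) * V x)"
    using step by (intro mult_left_mono) auto
  also have "\<dots> = ennreal (P * ((1 - y t) * V x))"
    using P0 y1 V_nonneg[of x] by (simp add: ennreal_mult)
  also have "P * ((1 - y t) * V x) = (\<Prod>j<Suc n. (1 - y (t+j))) * V x"
    unfolding P_def by (subst prod.lessThan_Suc_shift) simp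
  finally show ?case .
qed

lemma one_step:
  fixes A :: "'n::finite \<Rightarrow> 'n \<Rightarrow> real" and x :: "real^'n"
  assumes seld: "\<forall>i j. pmf sel (i, j) = A i j / real CARD('n)"
    and ma: "pmf (map_pmf fst q) Att = \<alpha>"
    and supp: "\<forall>e\<in>set_pmf q. e \<in> Sup2"
  shows "(\<Sum>c\<in>UNIV. pmf (pair_pmf sel q) c * V (gossip_step t s c x))
       = V x - 2*t*(1-t)*\<alpha>/real CARD('n) * (\<Sum>i\<in>UNIV. \<Sum>j\<in>UNIV. A i j * (x$i - x$j)^2)"
proof -
  define K where "K p = 2*t*(1-t)*(x$(fst p) - x$(snd p))^2" for p :: "'n \<times> 'n"
  have pe: "pmf q e * V (gossip_step t s (p, e) x) = pmf q e * V x - (if fst e = Att then pmf q e else 0) * K p"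
    for p e
  proof (cases "e \<in> set_pmf q")
    case True
    then have "snd (p, e) \<in> Sup2" using supp by simp
    from V_step[OF this, of t s x] have v: "V (gossip_step t s (p, e) x) = V x - (if fst e = Att then K p else 0)"
      by (simp add: K_def)
    show ?thesis by (cases "fst e = Att") (simp_all add: v algebra_simps)
  next
    case False
    then have "pmf q e = 0" by (simp add: set_pmf_eq)
    then show ?thesis by simp
  qed
  have s1: "(\<Sum>e\<in>UNIV. pmf q e) = 1" by (rule sum_pmf_eq_1) auto
  have s2: "(\<Sum>e\<in>UNIV. (if fst e = Att then pmf q e else 0)) = \<alpha>"
  proof -
    have "\<alpha> = measure q (fst -` {Att})" using ma by (simp add: pmf_map)
    also have "\<dots> = (\<Sum>e\<in>fst -` {Att}. pmf q e)" by (rule measure_measure_pmf_finite) simp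
    also have "\<dots> = (\<Sum>e\<in>{e\<in>UNIV. fst e = Att}. pmf q e)" by (rule sum.cong) auto
    also have "\<dots> = (\<Sum>e\<in>UNIV. (if fst e = Att then pmf q e else 0))" by (rule sum.inter_filter) simp
    finally show ?thesis by simp
  qed
  have inner: "(\<Sum>e\<in>UNIV. pmf q e * V (gossip_step t s (p, e) x)) = V x - \<alpha> * K p" for p
  proof -
    have "(\<Sum>e\<in>UNIV. pmf q e * V (gossip_step t s (p, e) x))
        = (\<Sum>e\<in>UNIV. pmf q e) * V x - (\<Sum>e\<in>UNIV. (if fst e = Att then pmf q e else 0)) * K p"
      by (simp add: pe sum_subtractf sum_distrib_right)
    then show ?thesis using s1 s2 by simp
  qed
  have s3: "(\<Sum>p\<in>UNIV. pmf sel p) = 1" by (rule sum_pmf_eq_1) auto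
  have "(\<Sum>c\<in>UNIV. pmf (pair_pmf sel q) c * V (gossip_step t s c x))
      = (\<Sum>p\<in>UNIV. \<Sum>e\<in>UNIV. pmf sel p * (pmf q e * V (gossip_step t s (p, e) x)))"
    by (subst sum_prod_UNIV) (simp add: pmf_pair mult.assoc)
  also have "\<dots> = (\<Sum>p\<in>UNIV. pmf sel p * (V x - \<alpha> * K p))"
    by (simp add: sum_distrib_left[symmetric] inner)
  also have "\<dots> = (\<Sum>p\<in>UNIV. pmf sel p) * V x - \<alpha> * (\<Sum>p\<in>UNIV. pmf sel p * K p)"
    by (simp add: algebra_simps sum_subtractf sum_distrib_left sum_distrib_right)
  also have "(\<Sum>p\<in>UNIV. pmf sel p * K p) = (\<Sum>i\<in>UNIV. \<Sum>j\<in>UNIV. A i j / real CARD('n) * K (i,j))"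
    by (subst sum_prod_UNIV) (simp add: seld)
  also have "\<dots> = 2*t*(1-t)/real CARD('n) * (\<Sum>i\<in>UNIV. \<Sum>j\<in>UNIV. A i j * (x$i - x$j)^2)"
    unfolding K_def sum_distrib_left by (intro sum.cong refl) (simp add: field_simps)
  finally show ?thesis using s3 by (simp add: algebra_simps)
qed

lemma part2_det:
  fixes x0 :: "real^'n::finite"
  assumes supp: "\<forall>k. snd (\<omega> !! k) \<in> Sup2" and Tr: "\<forall>k. 0 < T k \<and> T k \<le> 1"
    and INFz: "(INF k. ennreal (V (traj T S k0 x0 \<omega> (k0+k)))) = 0"
  shows "limsup (\<lambda>k. ereal (spread (traj T S k0 x0 \<omega> k))) = 0"
proof -
  have dec: "decseq (\<lambda>m. V (traj T S k0 x0 \<omega> m))"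
    by (rule decseq_SucI) (rule traj_mono[OF supp Tr])
  have lim: "(\<lambda>m. spread (traj T S k0 x0 \<omega> m)) \<longlonglongrightarrow> 0"
  proof (rule LIMSEQ_I)
    fix r :: real assume r: "0 < r"
    have "(INF k. ennreal (V (traj T S k0 x0 \<omega> (k0+k)))) < ennreal (r^2/2)"
      using INFz r by simp
    then obtain k where k: "ennreal (V (traj T S k0 x0 \<omega> (k0+k))) < ennreal (r^2/2)"
      by (auto simp: INF_less_iff)
    then have kv: "V (traj T S k0 x0 \<omega> (k0+k)) < r^2/2"
      by (simp add: ennreal_less_iff V_nonneg)
    show "\<exists>no. \<forall>n\<ge>no. norm (spread (traj T S k0 x0 \<omega> n) - 0) < r"
    proof (intro exI allI impI)
      fix n assume "k0 + k \<le> n"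
      then have "V (traj T S k0 x0 \<omega> n) \<le> V (traj T S k0 x0 \<omega> (k0+k))" using decseqD[OF dec] by blast
      then have "(spread (traj T S k0 x0 \<omega> n))^2 < r^2"
        using kv spread_sq_le[of "traj T S k0 x0 \<omega> n"] by linarith
      then have "spread (traj T S k0 x0 \<omega> n) < r"
        by (rule power2_less_imp_less) (use r in linarith)
      then show "norm (spread (traj T S k0 x0 \<omega> n) - 0) < r"
        using spread_nonneg[of "traj T S k0 x0 \<omega> n"] by simp
    qed
  qed
  have "limsup (\<lambda>k. ereal (spread (traj T S k0 x0 \<omega> k))) = ereal 0"
    by (rule lim_imp_Limsup) (simp, rule tendsto_ereal[OF lim])
  then show ?thesis by (simp add: zero_ereal_def)
qed

lemma div_bound:
  fixes a :: "nat \<Rightarrow> real"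
  assumes a0: "\<forall>k. 0 \<le> a k" and ns: "\<not> summable a" and b: "0 < b" and ba: "\<forall>k. b * a k \<le> 1"
    and e: "0 < e" and v: "0 \<le> v"
  shows "\<exists>k. (\<Prod>j<k. (1 - b * a (k0 + j))) * v \<le> e"
proof -
  obtain k where k: "(\<Sum>j<k. a (j + k0)) > v / (b * e)"
  proof (rule ccontr)
    assume "\<not> thesis"
    then have "\<forall>k. (\<Sum>j<k. a (j + k0)) \<le> v / (b * e)" using that by (meson not_less)
    then have "summable (\<lambda>j. a (j + k0))" by (intro summableI_nonneg_bounded) (use a0 in auto)
    then show False using ns by simp
  qed
  define s where "s = (\<Sum>j<k. b * a (k0 + j))"
  have s_eq: "s = b * (\<Sum>j<k. a (j + k0))" by (simp add: s_def sum_distrib_left add.commute)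
  have s0: "0 \<le> s" unfolding s_def using a0 b by (simp add: sum_nonneg)
  have "(\<Prod>j<k. (1 - b * a (k0 + j))) \<le> exp (- s)"
    unfolding s_def by (rule prod_upper) (use a0 b ba in auto)
  also have "\<dots> \<le> 1 / (1 + s)"
  proof -
    have "1 + s \<le> exp s" by simp
    then show ?thesis using s0 by (simp add: exp_minus field_simps)
  qed
  finally have p0: "(\<Prod>j<k. (1 - b * a (k0 + j))) \<le> 1 / (1 + s)" .
  have p: "(\<Prod>j<k. (1 - b * a (k0 + j))) * v \<le> v / (1 + s)"
    using mult_right_mono[OF p0 v] by simp
  have "v \<le> e * s"
  proof -
    have "v / (b * e) * (b * e) \<le> (\<Sum>j<k. a (j + k0)) * (b * e)"
      using k b e by (intro mult_right_mono) auto
    then show ?thesis using b e by (simp add: s_eq algebra_simps)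
  qed
  then have ve: "v / (1 + s) \<le> e" using s0 e by (simp add: field_simps)
  show ?thesis by (rule exI[of _ k]) (rule order_trans[OF p ve])
qed

lemma supp_from_pair:
  assumes "\<forall>k. \<omega> !! k \<in> set_pmf (pair_pmf sel q)" and "\<forall>e\<in>set_pmf q. e \<in> Sup2"
  shows "\<forall>k. snd (\<omega> !! k) \<in> Sup2"
proof
  fix k
  have "snd (\<omega> !! k) \<in> set_pmf q" using assms(1)[rule_format, of k] by (auto simp: mem_Times_iff)
  then show "snd (\<omega> !! k) \<in> Sup2" using assms(2) by blast
qed

lemma part2:
  fixes A :: "'n::finite \<Rightarrow> 'n \<Rightarrow> real" and x0 :: "real^'n"
  assumes A_nonneg: "\<forall>i j. A i j \<ge> 0" and wc: "weakly_connected A"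
    and seld: "\<forall>i j. pmf sel (i, j) = A i j / real CARD('n)"
    and ma: "pmf (map_pmf fst q) Att = \<alpha>" and ap: "\<alpha> > 0"
    and suppq: "\<forall>e\<in>set_pmf q. e \<in> Sup2" and Tr: "\<forall>k. 0 < T k \<and> T k \<le> 1"
    and ns: "\<not> summable (\<lambda>k. T k * (1 - T k))"
  shows "AE \<omega> in stream_space (measure_pmf (pair_pmf sel q)).
           limsup (\<lambda>k. ereal (spread (traj T S k0 x0 \<omega> k))) = 0"
proof -
  let ?M = "pair_pmf sel q"
  let ?SM = "stream_space (measure_pmf ?M)"
  obtain cc where cc: "cc > 0" "\<forall>x::real^'n. cc * V x \<le> (\<Sum>i\<in>UNIV. \<Sum>j\<in>UNIV. A i j * (x$i - x$j)^2)"
    using conn_const[OF A_nonneg wc] by blast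
  define b where "b = min 1 (2*\<alpha>*cc/real CARD('n))"
  have b0: "0 < b" "b \<le> 1" "b \<le> 2*\<alpha>*cc/real CARD('n)" using ap cc by (auto simp: b_def)
  define a where "a = (\<lambda>k. T k * (1 - T k))"
  have a0: "0 \<le> a k" for k using Tr unfolding a_def by (metis diff_ge_0_iff_ge less_imp_le mult_nonneg_nonneg)
  have a1: "a k \<le> 1/4" for k
  proof -
    have "1/4 - a k = (T k - 1/2)^2" by (simp add: a_def power2_eq_square algebra_simps)
    then show ?thesis by (metis diff_ge_0_iff_ge zero_le_power2)
  qed
  define y where "y k = b * a k" for k
  have ba: "b * a k \<le> 1" for k
  proof -
    have "b * a k \<le> 1 * 1" using b0 a0[of k] a1[of k] by (intro mult_mono) auto
    then show ?thesis by simp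
  qed
  have y1: "\<forall>t. 0 \<le> 1 - y t" using ba by (simp add: y_def)
  have step: "\<forall>t (x::real^'n). (\<integral>\<^sup>+c. ennreal (V (gossip_step (T t) (S t) c x)) \<partial>measure_pmf ?M) \<le> ennreal ((1 - y t) * V x)"
  proof (intro allI)
    fix t and x :: "real^'n"
    define Q where "Q = (\<Sum>i\<in>UNIV. \<Sum>j\<in>UNIV. A i j * (x$i - x$j)^2)"
    define N where "N = real CARD('n)"
    have eq1: "(\<integral>\<^sup>+c. ennreal (V (gossip_step (T t) (S t) c x)) \<partial>measure_pmf ?M)
          = ennreal (\<Sum>c\<in>UNIV. pmf ?M c * V (gossip_step (T t) (S t) c x))"
      by (rule nn_pmf_fin) (rule V_nonneg)
    have eq2: "(\<Sum>c\<in>UNIV. pmf ?M c * V (gossip_step (T t) (S t) c x)) = V x - 2*T t*(1-T t)*\<alpha>/N * Q"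
      unfolding Q_def N_def by (rule one_step[OF seld ma suppq])
    have h1: "cc * V x \<le> Q" using cc unfolding Q_def by blast
    have kk: "0 \<le> 2*a t*\<alpha>/N" using a0[of t] ap by (simp add: N_def)
    have m1: "2*a t*\<alpha>/N * (cc * V x) \<le> 2*a t*\<alpha>/N * Q" by (rule mult_left_mono[OF h1 kk])
    have bN: "b \<le> 2*\<alpha>*cc/N" using b0(3) by (simp add: N_def)
    have aV: "0 \<le> a t * V x" using a0[of t] V_nonneg[of x] by simp
    have m2: "b * (a t * V x) \<le> (2*\<alpha>*cc/N) * (a t * V x)"
      by (rule mult_right_mono[OF bN aV])
    have "V x - 2*T t*(1-T t)*\<alpha>/N * Q = V x - (2*a t*\<alpha>/N) * Q" by (simp add: a_def)
    also have "\<dots> \<le> V x - (2*a t*\<alpha>/N) * (cc * V x)" using m1 by linarith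
    also have "\<dots> = V x - (2*\<alpha>*cc/N) * (a t * V x)" by (simp add: algebra_simps)
    also have "\<dots> \<le> V x - b * (a t * V x)" using m2 by linarith
    also have "\<dots> = (1 - y t) * V x" by (simp add: y_def algebra_simps)
    finally have "V x - 2*T t*(1-T t)*\<alpha>/N * Q \<le> (1 - y t) * V x" .
    then show "(\<integral>\<^sup>+c. ennreal (V (gossip_step (T t) (S t) c x)) \<partial>measure_pmf ?M) \<le> ennreal ((1 - y t) * V x)"
      unfolding eq1 eq2 by (rule ennreal_leI)
  qed
  have expk: "(\<integral>\<^sup>+\<omega>. ennreal (V (traj T S k0 x0 \<omega> (k0+k))) \<partial>?SM) \<le> ennreal ((\<Prod>j<k. (1 - y (k0+j))) * V x0)" for k
  proof -
    have "(\<integral>\<^sup>+\<omega>. ennreal (V (traj T S k0 x0 \<omega> (k0+k))) \<partial>?SM) = (\<integral>\<^sup>+\<omega>. ennreal (V (G T S k0 x0 k (sdrop k0 \<omega>))) \<partial>?SM)"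
      by (simp add: traj_G)
    also have "\<dots> = (\<integral>\<^sup>+\<omega>. ennreal (V (G T S k0 x0 k \<omega>)) \<partial>?SM)"
      by (rule sdrop_nn[where f = "\<lambda>\<omega>. ennreal (V (G T S k0 x0 k \<omega>))"]) (rule G_meas)
    also have "\<dots> \<le> ennreal ((\<Prod>j<k. (1 - y (k0+j))) * V x0)" by (rule G_expect[OF step y1])
    finally show ?thesis .
  qed
  define u where "u \<omega> = (INF k. ennreal (V (traj T S k0 x0 \<omega> (k0+k))))" for \<omega>
  have um: "u \<in> borel_measurable ?SM"
  proof -
    have "(\<lambda>\<omega>. ennreal (V (traj T S k0 x0 \<omega> (k0+k)))) \<in> borel_measurable ?SM" for k
    proof -
      have "(\<lambda>\<omega>. ennreal (V (G T S k0 x0 k (sdrop k0 \<omega>)))) \<in> borel_measurable ?SM"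
        by (rule measurable_compose[OF measurable_sdrop G_meas])
      then show ?thesis by (simp add: traj_G)
    qed
    then show ?thesis unfolding u_def by (intro borel_measurable_INF) auto
  qed
  have uint: "(\<integral>\<^sup>+\<omega>. u \<omega> \<partial>?SM) = 0"
  proof -
    have eps: "(\<integral>\<^sup>+\<omega>. u \<omega> \<partial>?SM) \<le> 0 + ennreal e" if e: "0 < e" for e
    proof -
      have nsa: "\<not> summable a" using ns by (simp add: a_def)
      obtain k where k: "(\<Prod>j<k. (1 - b * a (k0 + j))) * V x0 \<le> e"
        using div_bound[OF _ nsa b0(1) _ e V_nonneg[of x0], of k0] a0 ba by blast
      have "(\<integral>\<^sup>+\<omega>. u \<omega> \<partial>?SM) \<le> (\<integral>\<^sup>+\<omega>. ennreal (V (traj T S k0 x0 \<omega> (k0+k))) \<partial>?SM)"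
        by (rule nn_integral_mono) (unfold u_def, rule INF_lower, simp)
      also have "\<dots> \<le> ennreal ((\<Prod>j<k. (1 - y (k0+j))) * V x0)" by (rule expk)
      also have "\<dots> \<le> ennreal e" using k by (intro ennreal_leI) (simp add: y_def)
      finally show ?thesis by simp
    qed
    have "(\<integral>\<^sup>+\<omega>. u \<omega> \<partial>?SM) \<le> 0"
    proof (rule ennreal_le_epsilon)
      fix e :: real assume "0 < e"
      then show "(\<integral>\<^sup>+\<omega>. u \<omega> \<partial>?SM) \<le> 0 + ennreal e" by (rule eps)
    qed
    then show ?thesis by simp
  qed
  have AEu: "AE \<omega> in ?SM. u \<omega> = 0" using uint um by (simp add: nn_integral_0_iff_AE)
  show ?thesis
    using AEu AE_supp[of ?M]
  proof eventually_elim
    case (elim \<omega>)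
    have supp: "\<forall>k. snd (\<omega> !! k) \<in> Sup2" by (rule supp_from_pair[OF elim(2) suppq])
    have iz: "(INF k. ennreal (V (traj T S k0 x0 \<omega> (k0+k)))) = 0" using elim(1) unfolding u_def .
    show ?case by (rule part2_det[OF supp Tr iz])
  qed
qed


theorem theorem3:
  fixes A :: "'n::finite \<Rightarrow> 'n \<Rightarrow> real"
    and sel :: "('n \<times> 'n) pmf"
    and q :: "(act \<times> act) pmf"
    and \<alpha> \<beta> \<gamma> :: real
    and T S :: "nat \<Rightarrow> real"
  assumes n3: "CARD('n) \<ge> 3"
    and A_nonneg: "\<forall>i j. A i j \<ge> 0"
    and A_stoch: "\<forall>i. (\<Sum>j\<in>UNIV. A i j) = 1"
    and sel_def: "\<forall>i j. pmf sel (i, j) = A i j / real CARD('n)"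
    and marg_i: "pmf (map_pmf fst q) Att = \<alpha>" "pmf (map_pmf fst q) Neu = \<beta>"
                "pmf (map_pmf fst q) Rep = \<gamma>"
    and marg_j: "pmf (map_pmf snd q) Att = \<alpha>" "pmf (map_pmf snd q) Neu = \<beta>"
                "pmf (map_pmf snd q) Rep = \<gamma>"
    and alpha_pos: "\<alpha> > 0"
    and T_range: "\<forall>k. 0 < T k \<and> T k \<le> 1"
    and S_pos: "\<forall>k. S k > 0"
    and A1: "weakly_connected A"
    and A2: "\<gamma> = 0"
    and A3: "\<forall>e\<in>set_pmf q. fst e = Att \<longleftrightarrow> snd e = Att"
    and T_mono: "(\<forall>k. T (Suc k) \<le> T k) \<or> (\<forall>k. T (Suc k) \<ge> T k)"
  shows "(summable (\<lambda>k. T k * (1 - T k)) \<longrightarrow>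
            (\<exists>K0. \<forall>k0\<ge>K0. AE x0 in (lborel :: (real^'n) measure).
               AE \<omega> in stream_space (measure_pmf (pair_pmf sel q)).
                 limsup (\<lambda>k. ereal (spread (traj T S k0 x0 \<omega> k))) \<noteq> 0))
       \<and> (\<not> summable (\<lambda>k. T k * (1 - T k)) \<longrightarrow>
            (\<forall>k0 x0. AE \<omega> in stream_space (measure_pmf (pair_pmf sel q)).
                 limsup (\<lambda>k. ereal (spread (traj T S k0 x0 \<omega> k))) = 0))"
  proof -
  have suppq: "\<forall>e\<in>set_pmf q. e \<in> Sup2"
  proof
    fix e assume "e \<in> set_pmf q"
    have r1: "pmf (map_pmf fst q) Rep = 0" using marg_i(3) A2 by simp
    have r2: "pmf (map_pmf snd q) Rep = 0" using marg_j(3) A2 by simp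
    show "e \<in> Sup2" by (rule supp_q[OF r1 r2 A3 \<open>e \<in> set_pmf q\<close>])
  qed
  show ?thesis
  proof (intro conjI impI)
    assume sa: "summable (\<lambda>k. T k * (1 - T k))"
    have "eventually (\<lambda>k. T k * (1 - T k) < 1/8) sequentially"
      using order_tendstoD(2)[OF summable_LIMSEQ_zero[OF sa], of "1/8"] by simp
    then obtain K0 where K0: "\<forall>j\<ge>K0. T j * (1 - T j) < 1/8" by (auto simp: eventually_sequentially)
    show "\<exists>K0. \<forall>k0\<ge>K0. AE x0 in (lborel :: (real^'n) measure).
               AE \<omega> in stream_space (measure_pmf (pair_pmf sel q)).
                 limsup (\<lambda>k. ereal (spread (traj T S k0 x0 \<omega> k))) \<noteq> 0"
    proof (intro exI allI impI)
      fix k0 assume "K0 \<le> k0"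
      then have small: "\<forall>j\<ge>k0. T j * (1 - T j) \<le> 1/8" using K0 by (auto simp: less_imp_le)
      have c2: "CARD('n) \<ge> 2" using n3 by simp
      show "AE x0 in (lborel :: (real^'n) measure).
               AE \<omega> in stream_space (measure_pmf (pair_pmf sel q)).
                 limsup (\<lambda>k. ereal (spread (traj T S k0 x0 \<omega> k))) \<noteq> 0"
        using AE_noncons[OF c2]
      proof eventually_elim
        case (elim x0)
        note V0 = elim
        show ?case using AE_supp[of "pair_pmf sel q"]
        proof eventually_elim
          case (elim \<omega>)
          show ?case by (rule part1_det[OF supp_from_pair[OF elim suppq] T_range sa small V0])
        qed
      qed
    qed
  next
    assume ns: "\<not> summable (\<lambda>k. T k * (1 - T k))"
    show "\<forall>k0 x0. AE \<omega> in stream_space (measure_pmf (pair_pmf sel q)).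
                 limsup (\<lambda>k. ereal (spread (traj T S k0 x0 \<omega> k))) = 0"
      by (intro allI) (rule part2[OF A_nonneg A1 sel_def marg_i(1) alpha_pos suppq T_range ns])
  qed
qed



end
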